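(* Let $n\ge 2$ and let $P=c_1\vee\dots\vee c_m$ be a Boolean formula in disjunctive normal form over variables $a_1,\dots,a_n$, where each clause $c_j$ is a conjunction of at least one literal. Let $X=\{x_1,\dots,x_n,t_1,\dots,t_n,f_1,\dots,f_n\}$ (all distinct) and set $x_{n+1}=x_1$. For each $j$ let $S_j=\{t_i: a_i \text{ occurs in } c_j\}\cup\{f_i:\neg a_i\text{ occurs in } c_j\}$. Let $\Sigma$ consist of the implications $\{x_i,t_i\}\rightarrow\{x_{i+1}\}$ and $\{x_i,f_i\}\rightarrow\{x_{i+1}\}$ for $1\le i\le n$, together with $S_j\rightarrow\{x_1\}$ for $1\le j\le m$. Then the closure system on $X$ associated with $\Sigma$ is a convex geometry if and only if $P$ is a tautology (true under every truth assignment).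
   Context: An implication on a set $X$ is a pair $A\rightarrow B$ with $A,B\subseteq X$, $B\ne\emptyset$. For a set $\Sigma$ of implications on $X$, the associated closure system $\langle X,\phi\rangle$ has as closed sets exactly the $S\subseteq X$ such that $A\subseteq S$ implies $B\subseteq S$ for every $(A\rightarrow B)\in\Sigma$, and $\phi(A)$ is the intersection of closed sets containing $A$. A convex geometry is a finite closure system with $\phi(\emptyset)=\emptyset$ satisfying the anti-exchange property: for every closed set $A\subsetneq X$ and all distinct $x,y\in X\setminus A$, $y\notin\phi(A\cup\{x\})$ or $x\notin\phi(A\cup\{y\})$ (equivalently, for every closed $A\subsetneq X$ there is $e\in X\setminus A$ with $A\cup\{e\}$ closed). *)

theory Defs
  imports Main
begin

type_synonym 'a implication = "'a set \<times> 'a set"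

definition is_implication_on :: "'a set \<Rightarrow> 'a implication \<Rightarrow> bool" where
  "is_implication_on X imp \<longleftrightarrow> fst imp \<subseteq> X \<and> snd imp \<subseteq> X \<and> snd imp \<noteq> {}"

definition imp_closed :: "'a set \<Rightarrow> 'a implication set \<Rightarrow> 'a set \<Rightarrow> bool" where
  "imp_closed X \<Sigma> S \<longleftrightarrow> S \<subseteq> X \<and> (\<forall>(A, B) \<in> \<Sigma>. A \<subseteq> S \<longrightarrow> B \<subseteq> S)"

definition imp_closure :: "'a set \<Rightarrow> 'a implication set \<Rightarrow> 'a set \<Rightarrow> 'a set" where
  "imp_closure X \<Sigma> A = \<Inter> {S. imp_closed X \<Sigma> S \<and> A \<subseteq> S}"

definition closure_system :: "'a set \<Rightarrow> ('a set \<Rightarrow> 'a set) \<Rightarrow> bool" where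
  "closure_system X \<phi> \<longleftrightarrow>
     (\<forall>A. A \<subseteq> X \<longrightarrow> A \<subseteq> \<phi> A \<and> \<phi> A \<subseteq> X \<and> \<phi> (\<phi> A) = \<phi> A) \<and>
     (\<forall>A B. A \<subseteq> B \<and> B \<subseteq> X \<longrightarrow> \<phi> A \<subseteq> \<phi> B)"

definition convex_geometry :: "'a set \<Rightarrow> ('a set \<Rightarrow> 'a set) \<Rightarrow> bool" where
  "convex_geometry X \<phi> \<longleftrightarrow>
     finite X \<and> closure_system X \<phi> \<and> \<phi> {} = {} \<and>
     (\<forall>A. A \<subseteq> X \<and> \<phi> A = A \<and> A \<noteq> X \<longrightarrow>
        (\<forall>x \<in> X - A. \<forall>y \<in> X - A. x \<noteq> y \<longrightarrow>
            y \<notin> \<phi> (A \<union> {x}) \<or> x \<notin> \<phi> (A \<union> {y})))"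

datatype elem = Xe nat | Te nat | Fe nat

definition ground :: "nat \<Rightarrow> elem set" where
  "ground n = Xe ` {1..n} \<union> Te ` {1..n} \<union> Fe ` {1..n}"

definition nxt :: "nat \<Rightarrow> nat \<Rightarrow> nat" where
  "nxt n i = (if i = n then 1 else i + 1)"

text \<open>A literal is (i, True) for a_i and (i, False) for the negation of a_i.
  A clause is a set of literals (a conjunction); a DNF formula is a list of clauses
  c_1, ..., c_m (a disjunction).\<close>
type_synonym literal = "nat \<times> bool"
type_synonym clause = "literal set"
type_synonym dnf = "clause list"

definition clause_sat :: "(nat \<Rightarrow> bool) \<Rightarrow> clause \<Rightarrow> bool" where
  "clause_sat v c \<longleftrightarrow> (\<forall>(i, b) \<in> c. v i = b)"

definition dnf_sat :: "(nat \<Rightarrow> bool) \<Rightarrow> dnf \<Rightarrow> bool" where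
  "dnf_sat v P \<longleftrightarrow> (\<exists>c \<in> set P. clause_sat v c)"

definition tautology :: "dnf \<Rightarrow> bool" where
  "tautology P \<longleftrightarrow> (\<forall>v. dnf_sat v P)"

definition well_formed_dnf :: "nat \<Rightarrow> dnf \<Rightarrow> bool" where
  "well_formed_dnf n P \<longleftrightarrow> (\<forall>c \<in> set P. c \<noteq> {} \<and> (\<forall>(i, b) \<in> c. 1 \<le> i \<and> i \<le> n))"

definition clause_set :: "clause \<Rightarrow> elem set" where
  "clause_set c = {Te i | i. (i, True) \<in> c} \<union> {Fe i | i. (i, False) \<in> c}"

definition sigma :: "nat \<Rightarrow> dnf \<Rightarrow> elem implication set" where
  "sigma n P =
     {({Xe i, Te i}, {Xe (nxt n i)}) | i. i \<in> {1..n}} \<union>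
     {({Xe i, Fe i}, {Xe (nxt n i)}) | i. i \<in> {1..n}} \<union>
     {(clause_set c, {Xe 1}) | c. c \<in> set P}"

end

theory Submission
  imports Defs
begin

lemma closure_sub:
  assumes "imp_closed X \<Sigma> S" "A \<subseteq> S"
  shows "imp_closure X \<Sigma> A \<subseteq> S"
  using assms unfolding imp_closure_def by auto

lemma closure_ext: "A \<subseteq> imp_closure X \<Sigma> A"
  unfolding imp_closure_def by auto

lemma closure_mem:
  assumes "\<And>S. imp_closed X \<Sigma> S \<Longrightarrow> A \<subseteq> S \<Longrightarrow> y \<in> S"
  shows "y \<in> imp_closure X \<Sigma> A"
  using assms unfolding imp_closure_def by auto

lemma X_closed:
  assumes "\<forall>(A, B) \<in> \<Sigma>. B \<subseteq> X"
  shows "imp_closed X \<Sigma> X"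
  using assms unfolding imp_closed_def by auto

lemma closure_closed:
  assumes "\<forall>(A, B) \<in> \<Sigma>. B \<subseteq> X" "A \<subseteq> X"
  shows "imp_closed X \<Sigma> (imp_closure X \<Sigma> A)"
proof -
  have "X \<in> {S. imp_closed X \<Sigma> S \<and> A \<subseteq> S}" using X_closed[OF assms(1)] assms(2) by auto
  let ?F = "{S. imp_closed X \<Sigma> S \<and> A \<subseteq> S}"
  have sub: "\<Inter>?F \<subseteq> X" using \<open>X \<in> ?F\<close> by blast
  have H0: "C \<subseteq> \<Inter>?F" if BC: "(B, C) \<in> \<Sigma>" "B \<subseteq> \<Inter>?F" for B C
  proof
    fix z assume z: "z \<in> C"
    show "z \<in> \<Inter>?F"
    proof
      fix S assume S: "S \<in> ?F"
      then have "B \<subseteq> S" using BC(2) by blast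
      then show "z \<in> S" using S BC(1) z unfolding imp_closed_def by blast
    qed
  qed
  have H: "\<forall>(B, C) \<in> \<Sigma>. B \<subseteq> \<Inter>?F \<longrightarrow> C \<subseteq> \<Inter>?F"
    using H0 by blast
  show ?thesis unfolding imp_closure_def imp_closed_def[of X \<Sigma> "\<Inter>?F"] by (rule conjI[OF sub H])
qed

lemma closed_fix:
  assumes "imp_closed X \<Sigma> A"
  shows "imp_closure X \<Sigma> A = A"
  by (rule antisym[OF closure_sub[OF assms order_refl] closure_ext])

lemma ground_simps[simp]:
  "Xe i \<in> ground n \<longleftrightarrow> 1 \<le> i \<and> i \<le> n"
  "Te i \<in> ground n \<longleftrightarrow> 1 \<le> i \<and> i \<le> n"
  "Fe i \<in> ground n \<longleftrightarrow> 1 \<le> i \<and> i \<le> n"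
  unfolding ground_def by (simp_all add: image_iff)

lemma nxt_range: "n \<ge> 1 \<Longrightarrow> i \<in> {1..n} \<Longrightarrow> nxt n i \<in> {1..n}"
  unfolding nxt_def by auto

lemma sigma_concl:
  assumes "n \<ge> 1"
  shows "\<forall>(A, B) \<in> sigma n P. B \<subseteq> ground n"
  using assms unfolding sigma_def nxt_def by auto

lemma closed_iff:
  "imp_closed (ground n) (sigma n P) S \<longleftrightarrow> S \<subseteq> ground n \<and>
    (\<forall>i\<in>{1..n}. Xe i \<in> S \<and> (Te i \<in> S \<or> Fe i \<in> S) \<longrightarrow> Xe (nxt n i) \<in> S) \<and>
    (\<forall>c\<in>set P. clause_set c \<subseteq> S \<longrightarrow> Xe 1 \<in> S)"
proof -
  have m1: "({Xe i, Te i}, {Xe (nxt n i)}) \<in> sigma n P" if "i \<in> {1..n}" for i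
    unfolding sigma_def by (rule UnI1, rule UnI1, rule CollectI, rule exI[of _ i]) (use that in simp)
  have m2: "({Xe i, Fe i}, {Xe (nxt n i)}) \<in> sigma n P" if "i \<in> {1..n}" for i
    unfolding sigma_def by (rule UnI1, rule UnI2, rule CollectI, rule exI[of _ i]) (use that in simp)
  have m3: "(clause_set c, {Xe 1}) \<in> sigma n P" if "c \<in> set P" for c
    unfolding sigma_def by (rule UnI2, rule CollectI, rule exI[of _ c]) (use that in simp)
  have cases: "Q" if "(A, B) \<in> sigma n P"
    "\<And>i. i \<in> {1..n} \<Longrightarrow> A = {Xe i, Te i} \<Longrightarrow> B = {Xe (nxt n i)} \<Longrightarrow> Q"
    "\<And>i. i \<in> {1..n} \<Longrightarrow> A = {Xe i, Fe i} \<Longrightarrow> B = {Xe (nxt n i)} \<Longrightarrow> Q"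
    "\<And>c. c \<in> set P \<Longrightarrow> A = clause_set c \<Longrightarrow> B = {Xe 1} \<Longrightarrow> Q" for A B Q
    using that(1) unfolding sigma_def
    apply (elim UnE CollectE exE conjE)
    apply (simp only: prod.inject)
    apply (metis that(2))
    apply (simp only: prod.inject)
    apply (metis that(3))
    apply (simp only: prod.inject)
    apply (metis that(4))
    done
  have "(\<forall>(A, B) \<in> sigma n P. A \<subseteq> S \<longrightarrow> B \<subseteq> S) \<longleftrightarrow>
    (\<forall>i\<in>{1..n}. Xe i \<in> S \<and> (Te i \<in> S \<or> Fe i \<in> S) \<longrightarrow> Xe (nxt n i) \<in> S) \<and>
    (\<forall>c\<in>set P. clause_set c \<subseteq> S \<longrightarrow> Xe 1 \<in> S)" (is "?L \<longleftrightarrow> ?R")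
  proof
    assume L: ?L
    show ?R
    proof (intro conjI ballI impI)
      fix i assume i: "i \<in> {1..n}" "Xe i \<in> S \<and> (Te i \<in> S \<or> Fe i \<in> S)"
      show "Xe (nxt n i) \<in> S"
      proof (cases "Te i \<in> S")
        case True
        have "{Xe i, Te i} \<subseteq> S \<longrightarrow> {Xe (nxt n i)} \<subseteq> S" using bspec[OF L m1[OF i(1)]] by simp
        then show ?thesis using i(2) True by simp
      next
        case False
        have "{Xe i, Fe i} \<subseteq> S \<longrightarrow> {Xe (nxt n i)} \<subseteq> S" using bspec[OF L m2[OF i(1)]] by simp
        then show ?thesis using i(2) False by simp
      qed
    next
      fix c assume "c \<in> set P" "clause_set c \<subseteq> S"
      moreover have "clause_set c \<subseteq> S \<longrightarrow> {Xe 1} \<subseteq> S" using bspec[OF L m3[OF \<open>c \<in> set P\<close>]] by simp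
      ultimately show "Xe 1 \<in> S" by simp
    qed
  next
    assume R: ?R
    have H: "B \<subseteq> S" if AB: "(A, B) \<in> sigma n P" "A \<subseteq> S" for A B
      proof (rule cases[OF AB(1)])
        fix i assume "i \<in> {1..n}" "A = {Xe i, Te i}" "B = {Xe (nxt n i)}"
        then show "B \<subseteq> S" using R AB(2) by simp
      next
        fix i assume "i \<in> {1..n}" "A = {Xe i, Fe i}" "B = {Xe (nxt n i)}"
        then show "B \<subseteq> S" using R AB(2) by simp
      next
        fix c assume c: "c \<in> set P" "A = clause_set c" "B = {Xe 1}"
        then have "clause_set c \<subseteq> S" using AB(2) by simp
        then have "Xe 1 \<in> S" using R c(1) by blast
        then show "B \<subseteq> S" using c by simp
      qed
    show ?L using H by auto
  qed
  then show ?thesis unfolding imp_closed_def by simp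
qed

lemma cg_ae:
  assumes "convex_geometry X phi" "phi A = A" "A \<subseteq> X" "A \<noteq> X" "a \<in> X - A" "b \<in> X - A" "a \<noteq> b"
  shows "b \<notin> phi (A \<union> {a}) \<or> a \<notin> phi (A \<union> {b})"
proof -
  have "\<forall>A. A \<subseteq> X \<and> phi A = A \<and> A \<noteq> X \<longrightarrow>
        (\<forall>x \<in> X - A. \<forall>y \<in> X - A. x \<noteq> y \<longrightarrow>
            y \<notin> phi (A \<union> {x}) \<or> x \<notin> phi (A \<union> {y}))"
    using assms(1) unfolding convex_geometry_def by (elim conjE)
  then show ?thesis using assms(2-7) by blast
qed

lemma cstep:
  assumes "imp_closed (ground n) (sigma n P) S" "i \<in> {1..n}" "Xe i \<in> S" "Te i \<in> S \<or> Fe i \<in> S"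
  shows "Xe (nxt n i) \<in> S"
  using assms unfolding closed_iff by blast

lemma cclause:
  assumes "imp_closed (ground n) (sigma n P) S" "c \<in> set P" "clause_set c \<subseteq> S"
  shows "Xe 1 \<in> S"
  using assms unfolding closed_iff by blast

lemma chain:
  assumes "imp_closed (ground n) (sigma n P) S" "Xe a \<in> S" "1 \<le> a"
    "\<forall>i\<in>{a..n}. Te i \<in> S \<or> Fe i \<in> S"
  shows "a + d \<le> n \<Longrightarrow> Xe (a + d) \<in> S"
proof (induction d)
  case 0 then show ?case using assms by simp
next
  case (Suc d)
  have "Xe (a + d) \<in> S" using Suc by simp
  moreover have "Te (a+d) \<in> S \<or> Fe (a+d) \<in> S" using assms(4) Suc.prems by auto
  moreover have "nxt n (a+d) = a + Suc d" using Suc.prems unfolding nxt_def by auto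
  ultimately show ?case using cstep[OF assms(1), of "a+d"] assms(3) Suc.prems by simp
qed

lemma clause_set_ne:
  assumes "c \<noteq> {}" shows "clause_set c \<noteq> {}"
proof -
  obtain i b where "(i, b) \<in> c" using assms by auto
  then show ?thesis unfolding clause_set_def by (cases b) auto
qed

definition rk :: "nat \<Rightarrow> nat \<Rightarrow> nat \<Rightarrow> nat" where
  "rk n k j = (if k < j then j else j + n)"

lemma rk_step:
  "k \<in> {1..n} \<Longrightarrow> i \<in> {1..n} \<Longrightarrow> i \<noteq> k \<Longrightarrow> rk n k i \<le> rk n k (nxt n i)"
  unfolding rk_def nxt_def by (simp split: if_split)

lemma rk_inj:
  "p \<in> {1..n} \<Longrightarrow> q \<in> {1..n} \<Longrightarrow> rk n k p = rk n k q \<Longrightarrow> p = q"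
  unfolding rk_def by (simp split: if_splits)

theorem theorem5:
  fixes n :: nat and P :: dnf
  assumes "n \<ge> 2"
    and "well_formed_dnf n P"
  shows "convex_geometry (ground n) (imp_closure (ground n) (sigma n P)) \<longleftrightarrow> tautology P"
proof -
  let ?X = "ground n" and ?S = "sigma n P"
  let ?phi = "imp_closure ?X ?S"
  have n1: "n \<ge> 1" using assms(1) by simp
  have concl: "\<forall>(A, B) \<in> ?S. B \<subseteq> ?X" using sigma_concl[OF n1] .
  show ?thesis
  proof
    assume cg: "convex_geometry ?X ?phi"
    show "tautology P"
    proof (rule ccontr)
      assume "\<not> tautology P"
      then obtain v where v: "\<not> dnf_sat v P" unfolding tautology_def by auto
      define A where "A = {Te i | i. i\<in>{1..n} \<and> v i} \<union> {Fe i | i. i\<in>{1..n} \<and> \<not> v i}"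
      have Acl: "imp_closed ?X ?S A"
        unfolding closed_iff
      proof (intro conjI ballI impI)
        show "A \<subseteq> ?X" unfolding A_def by auto
        show "\<And>i. i \<in> {1..n} \<Longrightarrow> Xe i \<in> A \<and> (Te i \<in> A \<or> Fe i \<in> A) \<Longrightarrow> Xe (nxt n i) \<in> A"
          unfolding A_def by auto
        fix c assume c: "c \<in> set P" "clause_set c \<subseteq> A"
        have "clause_sat v c"
          unfolding clause_sat_def
        proof (intro ballI, clarify)
          fix i b assume ib: "(i, b) \<in> c"
          show "v i = b"
          proof (cases b)
            case True
            then have "Te i \<in> A" using c ib unfolding clause_set_def by auto
            then show ?thesis using True unfolding A_def by auto
          next
            case False
            then have "Fe i \<in> A" using c ib unfolding clause_set_def by auto
            then show ?thesis using False unfolding A_def by auto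
          qed
        qed
        then show "Xe 1 \<in> A" using v c unfolding dnf_sat_def by auto
      qed
      have fixA: "?phi A = A" using closed_fix[OF Acl] .
      have x1: "Xe 1 \<in> ?X - A" "Xe 2 \<in> ?X - A" using assms(1) unfolding A_def by auto
      have AX: "A \<subseteq> ?X" "A \<noteq> ?X" using Acl x1 unfolding imp_closed_def by blast+
      have bl: "\<And>i. i \<in> {1..n} \<Longrightarrow> Te i \<in> A \<or> Fe i \<in> A" unfolding A_def by auto
      have "Xe 2 \<in> ?phi (A \<union> {Xe 1})"
      proof (rule closure_mem)
        fix S assume S: "imp_closed ?X ?S S" "A \<union> {Xe 1} \<subseteq> S"
        have "Te 1 \<in> S \<or> Fe 1 \<in> S" using bl[of 1] n1 S(2) by auto
        moreover have "nxt n 1 = 2" using assms(1) unfolding nxt_def by auto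
        ultimately show "Xe 2 \<in> S" using cstep[OF S(1), of 1] S(2) n1 by simp
      qed
      moreover have "Xe 1 \<in> ?phi (A \<union> {Xe 2})"
      proof (rule closure_mem)
        fix S assume S: "imp_closed ?X ?S S" "A \<union> {Xe 2} \<subseteq> S"
        have "\<forall>i\<in>{2..n}. Te i \<in> S \<or> Fe i \<in> S"
        proof
          fix i assume "i \<in> {2..n}"
          then have "i \<in> {1..n}" by auto
          then show "Te i \<in> S \<or> Fe i \<in> S" using bl S(2) by blast
        qed
        moreover have e: "2 + (n - 2) = n" using assms(1) by simp
        ultimately have "Xe n \<in> S" using chain[OF S(1), of 2 "n-2", unfolded e] S(2) by simp
        moreover have "Te n \<in> S \<or> Fe n \<in> S" using bl[of n] n1 S(2) by auto
        moreover have "nxt n n = 1" unfolding nxt_def by auto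
        ultimately show "Xe 1 \<in> S" using cstep[OF S(1), of n] n1 by simp
      qed
      moreover have "Xe 2 \<notin> ?phi (A \<union> {Xe 1}) \<or> Xe 1 \<notin> ?phi (A \<union> {Xe 2})"
        by (rule cg_ae[OF cg fixA AX x1]) simp
      ultimately show False by blast
    qed
  next
    assume taut: "tautology P"
    have fin: "finite ?X" unfolding ground_def by auto
    have cs: "closure_system ?X ?phi"
      unfolding closure_system_def
    proof (intro conjI allI impI)
      fix A assume A: "A \<subseteq> ?X"
      show "A \<subseteq> ?phi A" by (rule closure_ext)
      show "?phi A \<subseteq> ?X" using closure_closed[OF concl A] unfolding imp_closed_def by auto
      show "?phi (?phi A) = ?phi A" using closed_fix[OF closure_closed[OF concl A]] .
    next
      fix A B assume "A \<subseteq> B \<and> B \<subseteq> ?X"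
      then show "?phi A \<subseteq> ?phi B" unfolding imp_closure_def by auto
    qed
    have empty: "?phi {} = {}"
    proof (rule closed_fix)
      show "imp_closed ?X ?S {}" unfolding closed_iff
        using assms(2) clause_set_ne unfolding well_formed_dnf_def by auto
    qed
    have ae: "y \<notin> ?phi (A \<union> {x}) \<or> x \<notin> ?phi (A \<union> {y})"
      if A: "A \<subseteq> ?X" "?phi A = A" "A \<noteq> ?X" and xy: "x \<in> ?X - A" "y \<in> ?X - A" "x \<noteq> y"
      for A x y
    proof -
      have Acl: "imp_closed ?X ?S A" using closure_closed[OF concl A(1)] A(2) by simp
      define XS where "XS = Xe ` {1..n}"
      have XScl: "imp_closed ?X ?S (B \<union> XS)" if "B \<subseteq> ?X" for B
        using that nxt_range[OF n1] n1 unfolding closed_iff XS_def by auto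
      show ?thesis
      proof (cases "\<exists>p q. x = Xe p \<and> y = Xe q")
        case False
        then consider "\<forall>p. x \<noteq> Xe p" | "\<forall>q. y \<noteq> Xe q" by blast
        then show ?thesis
        proof cases
          case 1
          have "x \<notin> A \<union> {y} \<union> XS" using 1 xy unfolding XS_def by auto
          moreover have "A \<union> {y} \<subseteq> ?X" using A xy by auto
          then have "?phi (A \<union> {y}) \<subseteq> A \<union> {y} \<union> XS"
            by (intro closure_sub[OF XScl]) auto
          ultimately show ?thesis by blast
        next
          case 2
          have "y \<notin> A \<union> {x} \<union> XS" using 2 xy unfolding XS_def by auto
          moreover have "A \<union> {x} \<subseteq> ?X" using A xy by auto
          then have "?phi (A \<union> {x}) \<subseteq> A \<union> {x} \<union> XS"
            by (intro closure_sub[OF XScl]) auto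
          ultimately show ?thesis by blast
        qed
      next
        case True
        then obtain p q where pq: "x = Xe p" "y = Xe q" by blast
        have prange: "p \<in> {1..n}" "q \<in> {1..n}" using xy pq by auto
        have "p \<noteq> q" using pq xy by auto
        have "\<exists>k\<in>{1..n}. Te k \<notin> A \<and> Fe k \<notin> A"
        proof (rule ccontr)
          assume "\<not> ?thesis"
          then have all: "\<forall>i\<in>{1..n}. Te i \<in> A \<or> Fe i \<in> A" by auto
          define v where "v i = (Te i \<in> A)" for i
          obtain c where c: "c \<in> set P" "clause_sat v c"
            using taut unfolding tautology_def dnf_sat_def by auto
          have "clause_set c \<subseteq> A"
          proof
            fix e assume "e \<in> clause_set c"
            then consider i where "e = Te i" "(i, True) \<in> c" | i where "e = Fe i" "(i, False) \<in> c"
              unfolding clause_set_def by auto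
            then show "e \<in> A"
            proof cases
              case 1 then show ?thesis using c unfolding clause_sat_def v_def by auto
            next
              case 2
              then have "i \<in> {1..n}" using c assms(2) unfolding well_formed_dnf_def by auto
              then show ?thesis using 2 all c unfolding clause_sat_def v_def by fastforce
            qed
          qed
          then have "Xe 1 \<in> A" using cclause[OF Acl c(1)] by blast
          then have "Xe (1 + (p - 1)) \<in> A" using chain[OF Acl, of 1 "p - 1"] all prange by auto
          then show False using prange xy pq by auto
        qed
        then obtain k where k: "k \<in> {1..n}" "Te k \<notin> A" "Fe k \<notin> A" by blast
        define W where "W r = A \<union> {Xe j | j. j \<in> {1..n} \<and> rk n k r \<le> rk n k j}" for r
        have Wcl: "imp_closed ?X ?S (W r)" for r
          unfolding closed_iff
        proof (intro conjI ballI impI)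
          show "W r \<subseteq> ?X" using A unfolding W_def by auto
        next
          fix i assume i: "i \<in> {1..n}" "Xe i \<in> W r \<and> (Te i \<in> W r \<or> Fe i \<in> W r)"
          then have tf: "Te i \<in> A \<or> Fe i \<in> A" unfolding W_def by auto
          show "Xe (nxt n i) \<in> W r"
          proof (cases "Xe i \<in> A")
            case True
            then have "Xe (nxt n i) \<in> A" using cstep[OF Acl i(1) _ tf] by blast
            then show ?thesis unfolding W_def by auto
          next
            case False
            then have "rk n k r \<le> rk n k i" using i unfolding W_def by auto
            moreover have "i \<noteq> k" using tf k by auto
            ultimately have "rk n k r \<le> rk n k (nxt n i)" using rk_step[OF k(1) i(1)] by auto
            then show ?thesis using nxt_range[OF n1 i(1)] unfolding W_def by auto
          qed
        next
          fix c assume c: "c \<in> set P" "clause_set c \<subseteq> W r"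
          then have "clause_set c \<subseteq> A" unfolding W_def clause_set_def by auto
          then show "Xe 1 \<in> W r" using cclause[OF Acl c(1)] unfolding W_def by blast
        qed
        have Wsub: "A \<union> {Xe r} \<subseteq> W r" if "r \<in> {1..n}" for r using that unfolding W_def by auto
        have "rk n k p \<noteq> rk n k q" using rk_inj prange \<open>p \<noteq> q\<close> by blast
        then consider "rk n k q < rk n k p" | "rk n k p < rk n k q" by linarith
        then show ?thesis
        proof cases
          case 1
          have "Xe q \<notin> W p" using 1 xy pq unfolding W_def by auto
          moreover have "?phi (A \<union> {Xe p}) \<subseteq> W p" by (rule closure_sub[OF Wcl Wsub[OF prange(1)]])
          ultimately show ?thesis using pq by auto
        next
          case 2
          have "Xe p \<notin> W q" using 2 xy pq unfolding W_def by auto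
          moreover have "?phi (A \<union> {Xe q}) \<subseteq> W q" by (rule closure_sub[OF Wcl Wsub[OF prange(2)]])
          ultimately show ?thesis using pq by auto
        qed
      qed
    qed
    show "convex_geometry ?X ?phi"
      unfolding convex_geometry_def using fin cs empty ae by blast
  qed
qed

end
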